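(* Let $p=1$, $C_{\mathcal Y}>0$, and suppose there exist $x_1,x_2,x_3\in\mathcal X$ with $d_{\mathcal X}(x_3,x_1)=d_{\mathcal X}(x_3,x_2)=C_{\mathcal X}$ and $y_1\in\mathcal Y$ with $d_{\mathcal Y}(y_0,y_1)=C_{\mathcal Y}$. Let $\tilde d$ be defined by the GOSPA2 formula with $p=1$ but with penalty $C_2=C_{\mathcal X}+\frac12C_{\mathcal Y}$. Consider the graphs $G_1=([1],v,e)$ with $v_1=x_3$; $G_2=([2],w,f)$ with $w_1=x_1,w_2=x_2$, $f_{12}=f_{21}=y_1$ and $f_{ij}=y_0$ otherwise; $G_3=([3],u,g)$ with $u_i=x_i$ ($i\in[3]$), $g_{12}=g_{21}=y_1$ and $g_{ij}=y_0$ otherwise. Then $\tilde d(G_1,G_2)=C_2+\frac14C_{\mathcal Y}$ while $\tilde d(G_1,G_3)+\tilde d(G_3,G_2)\le C_2+\frac16C_{\mathcal Y}$; in particular $\tilde d$ violates the triangle inequality.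
   Context: Let $(\mathcal X,d_{\mathcal X})$ and $(\mathcal Y,d_{\mathcal Y})$ be pseudometric spaces with $\mathrm{diam}(\mathcal X)\le C_{\mathcal X}$, $\mathrm{diam}(\mathcal Y)\le C_{\mathcal Y}$, with a distinguished element $y_0\in\mathcal Y$ meaning "no edge". For $n\in\mathbb N_0$ write $[n]=\{1,\dots,n\}$ and $S_n$ for the permutations of $[n]$. An attributed simple graph is a triple $([n],v,e)$ with $v:[n]\to\mathcal X$ and $e:[n]^2\to\mathcal Y$ symmetric with $e(i,i)=y_0$; write $v_i=v(i)$, $e_{ii'}=e(i,i')$. The GOSPA2 formula with order $p$ and penalty $C_2$: for $([m],v,e),([n],w,f)$ with $n\ge\max\{m,1\}$ (otherwise swap), with $0/0:=0$, $$\frac{1}{n^{1/p}}\min_{\pi\in S_n}\Big[(n-m)C_2^p+\sum_{i\in[m]}d_{\mathcal X}(v_i,w_{\pi(i)})^p+\frac12\frac1{n-1}\Big(\sum_{(i,i')\in[m]^2}d_{\mathcal Y}(e_{ii'},f_{\pi(i)\pi(i')})^p+\sum_{(i,i')\in[n]^2\setminus[m]^2}d_{\mathcal Y}(y_0,f_{\pi(i)\pi(i')})^p\Big)\Big]^{1/p}.$$ *)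

theory Defs
  imports Complex_Main "HOL-Combinatorics.Permutations"
begin

definition pseudometric :: "('a \<Rightarrow> 'a \<Rightarrow> real) \<Rightarrow> bool" where
  "pseudometric d \<longleftrightarrow> (\<forall>a. d a a = 0) \<and> (\<forall>a b. d a b = d b a) \<and>
     (\<forall>a b c. d a c \<le> d a b + d b c)"

(* An attributed graph ([n], v, e) is represented as the triple (n, v, e);
   only the values of v on {1..n} and of e on {1..n}^2 matter. *)
type_synonym ('x,'y) agraph = "nat \<times> (nat \<Rightarrow> 'x) \<times> (nat \<Rightarrow> nat \<Rightarrow> 'y)"

definition is_attr_graph :: "'y \<Rightarrow> ('x,'y) agraph \<Rightarrow> bool" where
  "is_attr_graph y0 G = (case G of (n, v, e) \<Rightarrow>
     (\<forall>i\<in>{1..n}. \<forall>j\<in>{1..n}. e i j = e j i) \<and> (\<forall>i\<in>{1..n}. e i i = y0))"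

(* the bracketed cost for a fixed permutation pi, where m <= n *)
definition gospa2_cost ::
  "('x \<Rightarrow> 'x \<Rightarrow> real) \<Rightarrow> ('y \<Rightarrow> 'y \<Rightarrow> real) \<Rightarrow> 'y \<Rightarrow> real \<Rightarrow> real \<Rightarrow>
   ('x,'y) agraph \<Rightarrow> ('x,'y) agraph \<Rightarrow> (nat \<Rightarrow> nat) \<Rightarrow> real" where
  "gospa2_cost dX dY y0 p C2 G H \<pi> = (case G of (m, v, e) \<Rightarrow> case H of (n, w, f) \<Rightarrow>
     (real n - real m) * C2 powr p
     + (\<Sum>i\<in>{1..m}. dX (v i) (w (\<pi> i)) powr p)
     + (1/2) * (1 / (real n - 1)) *
       ((\<Sum>(i,i')\<in>{1..m}\<times>{1..m}. dY (e i i') (f (\<pi> i) (\<pi> i')) powr p)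
        + (\<Sum>(i,i')\<in>({1..n}\<times>{1..n}) - ({1..m}\<times>{1..m}). dY y0 (f (\<pi> i) (\<pi> i')) powr p)))"

(* the GOSPA2 formula for m <= n, n >= 1 (division by 0 is 0 in Isabelle, matching 0/0 := 0) *)
definition gospa2_ord ::
  "('x \<Rightarrow> 'x \<Rightarrow> real) \<Rightarrow> ('y \<Rightarrow> 'y \<Rightarrow> real) \<Rightarrow> 'y \<Rightarrow> real \<Rightarrow> real \<Rightarrow>
   ('x,'y) agraph \<Rightarrow> ('x,'y) agraph \<Rightarrow> real" where
  "gospa2_ord dX dY y0 p C2 G H =
     (1 / real (fst H) powr (1/p)) *
     (Min {gospa2_cost dX dY y0 p C2 G H \<pi> | \<pi>. \<pi> permutes {1..fst H}}) powr (1/p)"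

definition gospa2 ::
  "('x \<Rightarrow> 'x \<Rightarrow> real) \<Rightarrow> ('y \<Rightarrow> 'y \<Rightarrow> real) \<Rightarrow> 'y \<Rightarrow> real \<Rightarrow> real \<Rightarrow>
   ('x,'y) agraph \<Rightarrow> ('x,'y) agraph \<Rightarrow> real" where
  "gospa2 dX dY y0 p C2 G H =
     (if fst G = 0 \<and> fst H = 0 then 0
      else if fst G \<le> fst H then gospa2_ord dX dY y0 p C2 G H
      else gospa2_ord dX dY y0 p C2 H G)"

end

theory Submission
  imports Defs
begin

lemma fin_perm_set: "finite {f \<pi> | \<pi>. \<pi> permutes {1..(n::nat)}}"
  by (rule finite_image_set) (simp add: finite_permutations)

lemma min_le_perm:
  assumes "\<pi> permutes {1..(n::nat)}"
  shows "Min {f \<pi> | \<pi>. \<pi> permutes {1..n}} \<le> (f \<pi> :: real)"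
  by (rule Min_le[OF fin_perm_set]) (use assms in blast)

lemma min_eq_perm:
  assumes "\<And>\<pi>. \<pi> permutes {1..(n::nat)} \<Longrightarrow> f \<pi> = (c::real)"
  shows "Min {f \<pi> | \<pi>. \<pi> permutes {1..n}} = c"
proof -
  have "{f \<pi> | \<pi>. \<pi> permutes {1..n}} = {c}"
    using assms permutes_id by blast
  then show ?thesis by simp
qed

lemma min_ge_perm:
  assumes "\<And>\<pi>. \<pi> permutes {1..(n::nat)} \<Longrightarrow> f \<pi> \<ge> (c::real)"
  shows "Min {f \<pi> | \<pi>. \<pi> permutes {1..n}} \<ge> c"
proof -
  have "Min {f \<pi> | \<pi>. \<pi> permutes {1..n}} \<in> {f \<pi> | \<pi>. \<pi> permutes {1..n}}"
    by (rule Min_in[OF fin_perm_set]) (use permutes_id in blast)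
  then show ?thesis using assms by force
qed

lemma perm2: assumes "\<pi> permutes {1..(2::nat)}"
  shows "(\<pi> 1 = 1 \<and> \<pi> 2 = 2) \<or> (\<pi> 1 = 2 \<and> \<pi> 2 = 1)"
proof -
  have "\<pi> 1 \<in> {1..2}" "\<pi> 2 \<in> {1..2}" using assms permutes_in_image by fastforce+
  moreover have "\<pi> 1 \<noteq> \<pi> 2" using permutes_inj[OF assms] by (metis inj_eq numeral_One numeral_eq_iff semiring_norm(85))
  ultimately show ?thesis by auto
qed

lemma I1: "{1..1::nat} = {1}" by auto
lemma I2: "{1..2::nat} = {1,2}" by auto
lemma I2s: "{Suc 0..2} = {Suc 0,2}" by auto
lemma I3: "{1..3::nat} = {1,2,3}" by auto
lemma S22: "{1..2::nat}\<times>{1..2::nat} - {1..1}\<times>{1..1} = {(1::nat,2::nat),(2,1),(2,2)}" by (simp add: I1 I2) auto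
lemma S33: "{1..3::nat}\<times>{1..3::nat} - {1..1}\<times>{1..1} = {(1::nat,2::nat),(1,3),(2,1),(2,2),(2,3),(3,1),(3,2),(3,3)}" by (simp add: I1 I3) auto
lemma S32: "{1..3::nat}\<times>{1..3::nat} - {1..2}\<times>{1..2} = {(1::nat,3::nat),(2,3),(3,1),(3,2),(3,3)}" by (simp add: I2 I3) auto
lemma S11: "{1..1::nat}\<times>{1..1::nat} = {(1::nat,1::nat)}" by auto
lemma S2: "{1..2::nat}\<times>{1..2::nat} = {(1::nat,1::nat),(1,2),(2,1),(2,2)}" by (simp add: I2) auto


lemma cost_nonneg:
  assumes "m \<le> n" "1 \<le> n" "C2 \<ge> 0"
  shows "gospa2_cost dX dY y0 1 C2 (m,v,e) (n,w,f) \<pi> \<ge> 0"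
  unfolding gospa2_cost_def using assms
  by (auto intro!: add_nonneg_nonneg mult_nonneg_nonneg sum_nonneg simp: split_beta)

theorem mainTheorem10:
  fixes dX :: "'x \<Rightarrow> 'x \<Rightarrow> real" and dY :: "'y \<Rightarrow> 'y \<Rightarrow> real"
    and CX CY :: real and y0 y1 :: 'y and x1 x2 x3 :: 'x
  assumes "pseudometric dX" and "pseudometric dY"
    and "\<forall>a b. dX a b \<le> CX" and "\<forall>a b. dY a b \<le> CY"
    and "CY > 0"
    and "dX x3 x1 = CX" and "dX x3 x2 = CX" and "dY y0 y1 = CY"
  defines "C2 \<equiv> CX + CY / 2"
    and "G1 \<equiv> (1::nat, (\<lambda>i. x3), (\<lambda>i j. y0))"
    and "G2 \<equiv> (2::nat, (\<lambda>i. if i = 1 then x1 else x2),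
                (\<lambda>i j. if (i = 1 \<and> j = 2) \<or> (i = 2 \<and> j = 1) then y1 else y0))"
    and "G3 \<equiv> (3::nat, (\<lambda>i. if i = 1 then x1 else if i = 2 then x2 else x3),
                (\<lambda>i j. if (i = 1 \<and> j = 2) \<or> (i = 2 \<and> j = 1) then y1 else y0))"
    and "dt \<equiv> gospa2 dX dY y0 1 (CX + CY / 2)"
  shows "dt G1 G2 = C2 + CY / 4
    \<and> dt G1 G3 + dt G3 G2 \<le> C2 + CY / 6
    \<and> dt G1 G3 + dt G3 G2 < dt G1 G2"
proof -
  have dX0: "\<And>a. dX a a = 0" and dY0: "\<And>a. dY a a = 0"
    using assms(1,2) unfolding pseudometric_def by auto
  have dXn: "\<And>a b. dX a b \<ge> 0"
  proof -
    fix a b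
    have "dX a a \<le> dX a b + dX b a" "dX a b = dX b a" using assms(1) unfolding pseudometric_def by blast+
    then show "dX a b \<ge> 0" using dX0[of a] by linarith
  qed
  have dYn: "\<And>a b. dY a b \<ge> 0"
  proof -
    fix a b
    have "dY a a \<le> dY a b + dY b a" "dY a b = dY b a" using assms(2) unfolding pseudometric_def by blast+
    then show "dY a b \<ge> 0" using dY0[of a] by linarith
  qed
  have dYs: "dY y1 y0 = CY" using assms(2,8) unfolding pseudometric_def by metis
  have CY0: "CY \<ge> 0" using assms(5) by simp
  have CX0: "CX \<ge> 0" using dXn[of x3 x1] assms(6) by simp
  have C20: "CX + CY/2 \<ge> 0" using CX0 assms(5) by simp
  let ?c = "gospa2_cost dX dY y0 1 (CX + CY / 2)"
  have A: "Min {?c G1 G2 \<pi> | \<pi>. \<pi> permutes {1..2}} = 2*CX + 3/2*CY"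
  proof (rule min_eq_perm)
    fix \<pi> :: "nat \<Rightarrow> nat" assume "\<pi> permutes {1..2}"
    from perm2[OF this] show "?c G1 G2 \<pi> = 2*CX + 3/2*CY"
    proof
      assume "\<pi> 1 = 1 \<and> \<pi> 2 = 2"
      then show ?thesis unfolding gospa2_cost_def G1_def G2_def prod.case S22
        by (simp add: S11 C20 dX0 dY0 dYs CY0 assms(6,7,8) abs_of_nonneg CX0)
    next
      assume "\<pi> 1 = 2 \<and> \<pi> 2 = 1"
      then show ?thesis unfolding gospa2_cost_def G1_def G2_def prod.case S22
        by (simp add: S11 C20 dX0 dY0 dYs CY0 assms(6,7,8) abs_of_nonneg CX0)
    qed
  qed
  have d12: "dt G1 G2 = C2 + CY/4"
    unfolding dt_def gospa2_def gospa2_ord_def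
    using A assms(5) CX0 by (simp add: G1_def G2_def C2_def)
  have B1: "Min {?c G1 G3 \<pi> | \<pi>. \<pi> permutes {1..3}} \<le> 2*(CX + CY/2) + CY/2"
  proof -
    have "transpose 1 3 permutes {1..3::nat}" by (rule permutes_swap_id) auto
    then have "Min {?c G1 G3 \<pi> | \<pi>. \<pi> permutes {1..3}} \<le> ?c G1 G3 (transpose 1 3)"
      by (rule min_le_perm)
    also have "\<dots> = 2*(CX + CY/2) + CY/2" unfolding gospa2_cost_def G1_def G3_def prod.case S33
      by (simp add: S11 dX0 dY0 dYs CY0 assms(8) abs_of_nonneg C20)
    finally show ?thesis .
  qed
  have B2: "Min {?c G1 G3 \<pi> | \<pi>. \<pi> permutes {1..3}} \<ge> 0"
    by (rule min_ge_perm) (simp add: G1_def G3_def cost_nonneg C20)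
  have B3: "Min {?c G2 G3 \<pi> | \<pi>. \<pi> permutes {1..3}} \<le> CX + CY/2"
  proof -
    have "Min {?c G2 G3 \<pi> | \<pi>. \<pi> permutes {1..3}} \<le> ?c G2 G3 id"
      by (rule min_le_perm) (rule permutes_id)
    also have "\<dots> = CX + CY/2" unfolding gospa2_cost_def G2_def G3_def prod.case S32
      by (simp add: I2 I2s S2 dX0 dY0 dYs CY0 assms(8) abs_of_nonneg C20)
    finally show ?thesis .
  qed
  have B4: "Min {?c G2 G3 \<pi> | \<pi>. \<pi> permutes {1..3}} \<ge> 0"
    by (rule min_ge_perm) (simp add: G2_def G3_def cost_nonneg C20)
  have d13: "dt G1 G3 = Min {?c G1 G3 \<pi> | \<pi>. \<pi> permutes {1..3}} / 3"
    unfolding dt_def gospa2_def gospa2_ord_def using B2 by (simp add: G1_def G3_def)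
  have d32: "dt G3 G2 = Min {?c G2 G3 \<pi> | \<pi>. \<pi> permutes {1..3}} / 3"
    unfolding dt_def gospa2_def gospa2_ord_def using B4 by (simp add: G2_def G3_def)
  have s: "dt G1 G3 + dt G3 G2 \<le> C2 + CY/6"
    unfolding d13 d32 C2_def using B1 B3 by (simp add: field_simps)
  show ?thesis using d12 s assms(5) by linarith
qed

end
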